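(* Let $\mathbb{A}\colon\mathbb{R}^d\to\mathbb{R}^d$ be Lipschitz continuous and let $T>0$, $X_0\in\mathbb{R}^d$. Then there is a unique $(X,Z)\in\mathcal{C}^1([0,T),\mathbb{R}^{2d})$ with $X(0)=X_0$, $Z(0)=0$ satisfying, for all $t\in(0,T)$, \[ \dot X(t)=-Z(t)-\mathbb{A}(X(t)),\qquad \dot Z(t)=-\frac{1}{T-t}Z(t)-\frac{1}{T-t}\mathbb{A}(X(t)). \] *)

theory Defs
  imports "HOL-Analysis.Analysis"
begin

definition C1_on :: "real set \<Rightarrow> (real \<Rightarrow> 'a::real_normed_vector) \<Rightarrow> bool" where
  "C1_on S f \<longleftrightarrow> (\<exists>f'. (\<forall>t\<in>S. (f has_vector_derivative f' t) (at t within S))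
                        \<and> continuous_on S f')"

end

theory Submission
  imports Defs
begin


lemma picard_aux_bcontfun:
  fixes h :: "real \<Rightarrow> 'b::banach"
  assumes "0 \<le> S" "continuous_on {0..S} h"
  shows "(\<lambda>t. exp (- (2*K) * min S (max 0 t)) *\<^sub>R (y0 + integral {0..min S (max 0 t)} h)) \<in> bcontfun"
proof -
  define J where "J = (\<lambda>x. exp (- (2*K) * x) *\<^sub>R (y0 + integral {0..x} h))"
  have ci: "continuous_on {0..S} (\<lambda>x. integral {0..x} h)"
    unfolding continuous_on_eq_continuous_within
    using integral_has_vector_derivative[OF assms(2)] has_vector_derivative_continuous by blast
  have cJ: "continuous_on {0..S} J" unfolding J_def
    by (intro continuous_intros ci)
  have ccl: "continuous_on UNIV (\<lambda>t::real. min S (max 0 t))"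
    by (intro continuous_intros)
  have img: "(\<lambda>t::real. min S (max 0 t)) ` UNIV \<subseteq> {0..S}" using assms(1) by auto
  have c: "continuous_on UNIV (\<lambda>t. J (min S (max 0 t)))"
    by (rule continuous_on_compose2[OF cJ ccl img])
  have "range (\<lambda>t. J (min S (max 0 t))) \<subseteq> J ` {0..S}" using img by auto
  moreover have "bounded (J ` {0..S})"
    by (intro compact_imp_bounded compact_continuous_image cJ) simp
  ultimately have "bounded (range (\<lambda>t. J (min S (max 0 t))))" using bounded_subset by blast
  with c show ?thesis unfolding bcontfun_def J_def by simp
qed

lemma picard:
  fixes F :: "real \<Rightarrow> 'b::banach \<Rightarrow> 'b" and S K :: real and y0 :: 'b
  assumes S: "0 \<le> S" and K: "0 < K"
   and lip: "\<And>t u v. t \<in> {0..S} \<Longrightarrow> norm (F t u - F t v) \<le> K * norm (u - v)"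
   and cont: "\<And>g. continuous_on {0..S} g \<Longrightarrow> continuous_on {0..S} (\<lambda>s. F s (g s))"
  shows "\<exists>Y. (continuous_on {0..S} Y \<and> (\<forall>t\<in>{0..S}. Y t = y0 + integral {0..t} (\<lambda>s. F s (Y s))))
     \<and> (\<forall>Y'. (continuous_on {0..S} Y' \<and> (\<forall>t\<in>{0..S}. Y' t = y0 + integral {0..t} (\<lambda>s. F s (Y' s))))
          \<longrightarrow> (\<forall>t\<in>{0..S}. Y' t = Y t))"
proof -
  define cl where "cl = (\<lambda>t::real. min S (max 0 t))"
  have cl_in: "cl t \<in> {0..S}" for t using S by (auto simp: cl_def)
  have cl_id: "t \<in> {0..S} \<Longrightarrow> cl t = t" for t by (auto simp: cl_def)
  define H where "H = (\<lambda>h t. exp (- (2*K) * cl t) *\<^sub>R (y0 + integral {0..cl t} h))"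
  have Hb: "continuous_on {0..S} h \<Longrightarrow> H h \<in> bcontfun" for h
    unfolding H_def cl_def by (rule picard_aux_bcontfun[OF S])
  define hh where "hh = (\<lambda>g s. F s (exp (2 * K * s) *\<^sub>R apply_bcontfun g s))"
  have hhc: "continuous_on {0..S} (hh g)" for g
    unfolding hh_def by (intro cont continuous_intros continuous_on_subset[OF continuous_on_apply_bcontfun]) auto
  define \<Phi> where "\<Phi> = (\<lambda>g. Bcontfun (H (hh g)))"
  have \<Phi>_app: "apply_bcontfun (\<Phi> g) = H (hh g)" for g
    unfolding \<Phi>_def using Hb[OF hhc] by (simp add: Bcontfun_inverse)
  have contr: "dist (\<Phi> g1) (\<Phi> g2) \<le> (1/2) * dist g1 g2" for g1 g2
  proof (rule dist_bound)
    fix t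
    define d where "d = dist g1 g2"
    define c where "c = cl t"
    have c: "0 \<le> c" "c \<le> S" using cl_in[of t] by (auto simp: c_def)
    have d0: "0 \<le> d" by (simp add: d_def)
    have int1: "hh g1 integrable_on {0..c}" "hh g2 integrable_on {0..c}"
      using hhc c by (auto intro!: integrable_continuous_real continuous_on_subset[OF hhc])
    have bnd: "norm (hh g1 s - hh g2 s) \<le> K * d * exp (2 * K * s)" if "s \<in> {0..c}" for s
    proof -
      have "norm (hh g1 s - hh g2 s) \<le> K * norm (exp (2 * K * s) *\<^sub>R apply_bcontfun g1 s - exp (2 * K * s) *\<^sub>R apply_bcontfun g2 s)"
        unfolding hh_def using lip[of s] that c by auto
      also have "\<dots> = K * (exp (2 * K * s) * dist (apply_bcontfun g1 s) (apply_bcontfun g2 s))"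
        by (simp add: dist_norm flip: scaleR_diff_right)
      also have "\<dots> \<le> K * (exp (2 * K * s) * d)"
        using K unfolding d_def by (intro mult_left_mono dist_bounded) auto
      finally show ?thesis by (simp add: algebra_simps)
    qed
    have hi: "((\<lambda>s. K * d * exp (2 * K * s)) has_integral (d/2 * exp (2 * K * c) - d/2 * exp (2 * K * 0))) {0..c}"
      apply (rule fundamental_theorem_of_calculus[OF c(1)])
      using K by (auto intro!: derivative_eq_intros simp: has_real_derivative_iff_has_vector_derivative[symmetric])
    have "norm (integral {0..c} (hh g1) - integral {0..c} (hh g2)) = norm (integral {0..c} (\<lambda>s. hh g1 s - hh g2 s))"
      using int1 by (simp add: integral_diff)
    also have "\<dots> \<le> integral {0..c} (\<lambda>s. K * d * exp (2 * K * s))"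
      using bnd int1 hi by (intro integral_norm_bound_integral) (auto intro: integrable_diff)
    also have "\<dots> = d/2 * exp (2 * K * c) - d/2" using integral_unique[OF hi] by simp
    finally have n: "norm (integral {0..c} (hh g1) - integral {0..c} (hh g2)) \<le> d/2 * exp (2 * K * c) - d/2" .
    have "dist (apply_bcontfun (\<Phi> g1) t) (apply_bcontfun (\<Phi> g2) t)
        = exp (- (2*K) * c) * norm (integral {0..c} (hh g1) - integral {0..c} (hh g2))"
      by (simp add: \<Phi>_app H_def c_def dist_norm flip: scaleR_diff_right)
    also have "\<dots> \<le> exp (- (2*K) * c) * (d/2 * exp (2 * K * c) - d/2)"
      by (intro mult_left_mono n) auto
    also have "\<dots> = d/2 - d/2 * exp (- (2*K) * c)"
      by (simp add: algebra_simps flip: exp_add)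
    also have "\<dots> \<le> d/2" using d0 by simp
    finally show "dist (apply_bcontfun (\<Phi> g1) t) (apply_bcontfun (\<Phi> g2) t) \<le> 1/2 * dist g1 g2"
      by (simp add: d_def)
  qed
  have "\<exists>!g. \<Phi> g = g" by (rule banach_fix_type[of "1/2"]) (use contr in auto)
  then obtain g where gfix: "\<Phi> g = g" and uq: "\<And>g'. \<Phi> g' = g' \<Longrightarrow> g' = g" by blast
  define Y where "Y = (\<lambda>s. exp (2 * K * s) *\<^sub>R apply_bcontfun g s)"
  have Yc: "continuous_on {0..S} Y" unfolding Y_def
    by (intro continuous_intros continuous_on_subset[OF continuous_on_apply_bcontfun]) auto
  have hhY: "hh g = (\<lambda>s. F s (Y s))" by (simp add: hh_def Y_def)
  have Yeq: "Y t = y0 + integral {0..t} (\<lambda>s. F s (Y s))" if "t \<in> {0..S}" for t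
  proof -
    have "apply_bcontfun g t = H (hh g) t" using gfix \<Phi>_app by metis
    then have "apply_bcontfun g t = exp (- (2*K) * t) *\<^sub>R (y0 + integral {0..t} (\<lambda>s. F s (Y s)))"
      by (simp add: H_def cl_id[OF that] hhY)
    then show ?thesis by (simp add: Y_def flip: exp_add)
  qed
  show ?thesis
  proof (intro exI conjI allI impI ballI)
    show "continuous_on {0..S} Y" by (rule Yc)
    show "\<And>t. t \<in> {0..S} \<Longrightarrow> Y t = y0 + integral {0..t} (\<lambda>s. F s (Y s))" by (rule Yeq)
    fix Y' t
    assume a: "continuous_on {0..S} Y' \<and> (\<forall>t\<in>{0..S}. Y' t = y0 + integral {0..t} (\<lambda>s. F s (Y' s)))"
      and t: "t \<in> {0..S}"
    define h' where "h' = (\<lambda>s. F s (Y' s))"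
    have h'c: "continuous_on {0..S} h'" unfolding h'_def using a cont by blast
    have eqf: "(\<lambda>t. exp (- (2*K) * cl t) *\<^sub>R Y' (cl t)) = H h'"
      using a cl_in by (auto simp: H_def h'_def)
    define g' where "g' = Bcontfun (H h')"
    have g'app: "apply_bcontfun g' = H h'" unfolding g'_def using Hb[OF h'c] by (simp add: Bcontfun_inverse)
    have g'Y: "exp (2 * K * s) *\<^sub>R apply_bcontfun g' s = Y' s" if "s \<in> {0..S}" for s
      unfolding g'app eqf[symmetric] using cl_id[OF that] by (simp flip: exp_add)
    have "hh g' s = h' s" if "s \<in> {0..S}" for s using g'Y[OF that] by (simp add: hh_def h'_def)
    then have "integral {0..cl x} (hh g') = integral {0..cl x} h'" for x
      using cl_in[of x] by (intro integral_cong) auto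
    then have "\<Phi> g' = g'" by (intro bcontfun_eqI) (simp add: \<Phi>_app g'app H_def)
    then have "g' = g" by (rule uq)
    then show "Y' t = Y t" using g'Y[OF t] by (simp add: Y_def)
  qed
qed


lemma C1_on_cont: "C1_on S f \<Longrightarrow> continuous_on S f"
  unfolding C1_on_def continuous_on_eq_continuous_within using has_vector_derivative_continuous by blast

lemma hvd_fst: "(f has_vector_derivative f') F \<Longrightarrow> ((\<lambda>x. fst (f x)) has_vector_derivative fst f') F"
  unfolding has_vector_derivative_def by (drule has_derivative_fst) simp

lemma hvd_snd: "(f has_vector_derivative f') F \<Longrightarrow> ((\<lambda>x. snd (f x)) has_vector_derivative snd f') F"
  unfolding has_vector_derivative_def by (drule has_derivative_snd) simp

theorem theoremH1:
  fixes A :: "'a::euclidean_space \<Rightarrow> 'a" and T :: real and X0 :: 'a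
  assumes "\<exists>L. L-lipschitz_on UNIV A"
    and "T > 0"
  shows "\<exists>X Z. C1_on {0..<T} X \<and> C1_on {0..<T} Z \<and> X 0 = X0 \<and> Z 0 = 0 \<and>
           (\<forall>t\<in>{0<..<T}. (X has_vector_derivative (- Z t - A (X t))) (at t) \<and>
              (Z has_vector_derivative (- (1 / (T - t)) *\<^sub>R Z t - (1 / (T - t)) *\<^sub>R A (X t))) (at t)) \<and>
           (\<forall>X' Z'. (C1_on {0..<T} X' \<and> C1_on {0..<T} Z' \<and> X' 0 = X0 \<and> Z' 0 = 0 \<and>
              (\<forall>t\<in>{0<..<T}. (X' has_vector_derivative (- Z' t - A (X' t))) (at t) \<and>
                 (Z' has_vector_derivative (- (1 / (T - t)) *\<^sub>R Z' t - (1 / (T - t)) *\<^sub>R A (X' t))) (at t)))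
              \<longrightarrow> (\<forall>t\<in>{0..<T}. X' t = X t \<and> Z' t = Z t))"
proof -
  obtain L where L: "L-lipschitz_on UNIV A" using assms(1) by blast
  have L0: "0 \<le> L" using L by (simp add: lipschitz_on_def)
  have LA: "norm (A x - A y) \<le> L * norm (x - y)" for x y
    using L by (simp add: lipschitz_on_def dist_norm)
  have contA: "continuous_on UNIV A" by (rule lipschitz_on_continuous_on[OF L])
  have T: "0 < T" by (rule assms(2))
  define G where "G = (\<lambda>t (y::'a \<times> 'a). (- snd y - A (fst y), - (1/(T-t)) *\<^sub>R snd y - (1/(T-t)) *\<^sub>R A (fst y)))"
  define y0 where "y0 = (X0, 0::'a)"
  define P where "P = (\<lambda>S Y. continuous_on {0..S} Y \<and> (\<forall>t\<in>{0..S}. Y t = y0 + integral {0..t} (\<lambda>s. G s (Y s))))"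
  have Gcont: "continuous_on U (\<lambda>s. G s (g s))" if U: "U \<subseteq> {..<T}" and g: "continuous_on U g" for U g
  proof -
    have a: "continuous_on U (\<lambda>s. A (fst (g s)))"
      by (rule continuous_on_compose2[OF contA]) (auto intro: continuous_intros g)
    have "continuous_on U (\<lambda>s. 1 / (T - s))"
      using U by (intro continuous_intros) auto
    then show ?thesis unfolding G_def using a g U by (intro continuous_intros) auto
  qed
  have Glip: "norm (G t u - G t v) \<le> (1+L)*(1+1/(T-S)) * norm (u - v)"
    if "0 \<le> t" "t \<le> S" "S < T" for t S u v
  proof -
    define c where "c = 1/(T-t)"
    have c0: "0 < c" and cS: "c \<le> 1/(T-S)" using that by (auto simp: c_def intro!: divide_left_mono)
    define w where "w = (snd u - snd v) + (A (fst u) - A (fst v))"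
    have fn: "norm (fst u - fst v) \<le> norm (u - v)" using norm_fst_le[of "fst (u-v)" "snd (u-v)"] unfolding prod.collapse fst_diff[symmetric] by simp
    have sn: "norm (snd u - snd v) \<le> norm (u - v)" using norm_snd_le[of "snd (u-v)" "fst (u-v)"] unfolding prod.collapse snd_diff[symmetric] by simp
    have wn: "norm w \<le> (1+L) * norm (u - v)"
    proof -
      have "norm w \<le> norm (snd u - snd v) + norm (A (fst u) - A (fst v))" unfolding w_def by (rule norm_triangle_ineq)
      also have "\<dots> \<le> norm (u - v) + L * norm (u - v)"
        using sn LA[of "fst u" "fst v"] mult_left_mono[OF fn L0] by linarith
      finally show ?thesis by (simp add: algebra_simps)
    qed
    have eq: "G t u - G t v = (- w, - c *\<^sub>R w)"
      by (simp add: G_def c_def w_def algebra_simps)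
    have "norm (G t u - G t v) \<le> norm w + c * norm w"
      unfolding eq using norm_Pair_le[of "-w" "- c *\<^sub>R w"] c0 by simp
    also have "\<dots> = (1 + c) * norm w" by (simp add: algebra_simps)
    also have "\<dots> \<le> (1 + 1/(T-S)) * ((1+L) * norm (u - v))"
      using c0 cS wn by (intro mult_mono) auto
    finally show ?thesis by (simp only: ac_simps)
  qed
  have ex: "\<exists>Y. P S Y \<and> (\<forall>Y'. P S Y' \<longrightarrow> (\<forall>t\<in>{0..S}. Y' t = Y t))" if S: "0 < S" "S < T" for S
    unfolding P_def
  proof (rule picard)
    show "0 \<le> S" using S by simp
    show "0 < (1+L)*(1+1/(T-S))" using S L0 by (intro mult_pos_pos) (auto intro: add_pos_pos)
    show "norm (G t u - G t v) \<le> (1+L)*(1+1/(T-S)) * norm (u - v)" if "t \<in> {0..S}" for t u v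
      using that S by (intro Glip) auto
    show "continuous_on {0..S} (\<lambda>s. G s (g s))" if "continuous_on {0..S} g" for g
      using that S by (intro Gcont) auto
  qed
  define Yf where "Yf = (\<lambda>S. SOME Y. P S Y)"
  have YfP: "P S (Yf S)" if "0 < S" "S < T" for S
    unfolding Yf_def using ex[OF that] by (metis someI_ex)
  have Yfu: "Y' t = Yf S t" if hS: "0 < S" "S < T" "P S Y'" "t \<in> {0..S}" for S Y' t
  proof -
    obtain Y where "P S Y" "\<forall>Y'. P S Y' \<longrightarrow> (\<forall>t\<in>{0..S}. Y' t = Y t)" using ex[OF hS(1,2)] by blast
    then show ?thesis using YfP[OF hS(1,2)] hS by metis
  qed
  have Prestr: "P S1 Y" if "P S2 Y" "S1 \<le> S2" for S1 S2 Y
    using that unfolding P_def by (auto intro: continuous_on_subset)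
  have cons: "Yf S2 t = Yf S1 t" if "0 < S1" "S1 \<le> S2" "S2 < T" "t \<in> {0..S1}" for S1 S2 t
    using that by (intro Yfu Prestr[OF YfP]) auto
  define sol where "sol = (\<lambda>t. Yf ((t+T)/2) t)"
  have sol_eq: "sol t = Yf S t" if "0 \<le> t" "t \<le> S" "0 < S" "S < T" for t S
  proof -
    have "sol t = Yf (min ((t+T)/2) S) t" unfolding sol_def using that T
      by (intro cons) (auto simp: min_def)
    also have "\<dots> = Yf S t" using that T
      by (intro cons[symmetric]) (auto simp: min_def)
    finally show ?thesis .
  qed
  have dS: "(sol has_vector_derivative G t (sol t)) (at t within {0..S})"
    if S: "0 < S" "S < T" and t: "t \<in> {0..S}" for S t
  proof -
    have P: "P S (Yf S)" by (rule YfP[OF S])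
    have hc: "continuous_on {0..S} (\<lambda>s. G s (Yf S s))"
      using P S unfolding P_def by (intro Gcont) auto
    have "((\<lambda>u. y0 + integral {0..u} (\<lambda>s. G s (Yf S s))) has_vector_derivative G t (Yf S t)) (at t within {0..S})"
      using has_vector_derivative_add[OF has_vector_derivative_const integral_has_vector_derivative[OF hc t]] by simp
    then have "(Yf S has_vector_derivative G t (Yf S t)) (at t within {0..S})"
      by (rule has_vector_derivative_transform_within[where d=1]) (use t P in \<open>auto simp: P_def\<close>)
    then have "(sol has_vector_derivative G t (Yf S t)) (at t within {0..S})"
      by (rule has_vector_derivative_transform_within[where d=1]) (use t S in \<open>auto intro!: sol_eq[symmetric]\<close>)
    then show ?thesis using sol_eq[of t S] t S by simp
  qed
  have d0: "(sol has_vector_derivative G t (sol t)) (at t within {0..<T})" if t: "t \<in> {0..<T}" for t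
  proof -
    define S where "S = (t+T)/2"
    have S: "0 < S" "S < T" "t < S" using t T by (auto simp: S_def)
    have "at t within {0..<T} = at t within {0..S}"
      by (rule at_within_nhd[of _ "{-1<..<S}"]) (use S t in auto)
    then show ?thesis using dS[OF S(1,2)] S t by simp
  qed
  have d1: "(sol has_vector_derivative G t (sol t)) (at t)" if t: "t \<in> {0<..<T}" for t
  proof -
    define S where "S = (t+T)/2"
    have S: "0 < S" "S < T" "t < S" using t T by (auto simp: S_def)
    have "at t within {0..S} = at t"
      by (rule at_within_Icc_at) (use S t in auto)
    moreover have "(sol has_vector_derivative G t (sol t)) (at t within {0..S})" using dS[OF S(1,2), of t] S t by auto
    ultimately show ?thesis by simp
  qed
  have solc: "continuous_on {0..<T} sol"
    unfolding continuous_on_eq_continuous_within using d0 has_vector_derivative_continuous by blast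
  have Gsc: "continuous_on {0..<T} (\<lambda>t. G t (sol t))" by (intro Gcont solc) auto
  have sol0: "sol 0 = y0"
    using YfP[of "T/2"] T sol_eq[of 0 "T/2"] by (auto simp: P_def)
  have uniq: "X' t = fst (sol t) \<and> Z' t = snd (sol t)"
    if H: "C1_on {0..<T} X' \<and> C1_on {0..<T} Z' \<and> X' 0 = X0 \<and> Z' 0 = 0 \<and>
              (\<forall>t\<in>{0<..<T}. (X' has_vector_derivative (- Z' t - A (X' t))) (at t) \<and>
                 (Z' has_vector_derivative (- (1 / (T - t)) *\<^sub>R Z' t - (1 / (T - t)) *\<^sub>R A (X' t))) (at t))"
      and t: "t \<in> {0..<T}" for X' Z' t
  proof -
    define s' where "s' = (\<lambda>t. (X' t, Z' t))"
    define S where "S = (t+T)/2"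
    have S: "0 < S" "S < T" "t < S" using t T by (auto simp: S_def)
    have s'c: "continuous_on {0..<T} s'" unfolding s'_def
      using H by (intro continuous_intros C1_on_cont) auto
    have s'd: "(s' has_vector_derivative G x (s' x)) (at x)" if "x \<in> {0<..<T}" for x
      using H that unfolding s'_def by (auto simp: G_def intro!: has_vector_derivative_Pair)
    have "P S s'" unfolding P_def
    proof (intro conjI ballI)
      show "continuous_on {0..S} s'" by (rule continuous_on_subset[OF s'c]) (use S in auto)
      fix u assume u: "u \<in> {0..S}"
      have "((\<lambda>x. G x (s' x)) has_integral (s' u - s' 0)) {0..u}"
        by (rule fundamental_theorem_of_calculus_interior)
           (use u S in \<open>auto intro!: s'd continuous_on_subset[OF s'c]\<close>)
      then have "integral {0..u} (\<lambda>x. G x (s' x)) = s' u - y0"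
        using H by (simp add: integral_unique s'_def y0_def)
      then show "s' u = y0 + integral {0..u} (\<lambda>s. G s (s' s))" by simp
    qed
    then have "s' t = Yf S t" using S t by (intro Yfu) auto
    also have "\<dots> = sol t" using S t by (intro sol_eq[symmetric]) auto
    finally show ?thesis by (simp add: s'_def prod_eq_iff)
  qed
  show ?thesis
  proof (rule exI[of _ "\<lambda>t. fst (sol t)"], rule exI[of _ "\<lambda>t. snd (sol t)"], intro conjI ballI allI impI)
    show "C1_on {0..<T} (\<lambda>t. fst (sol t))" unfolding C1_on_def
      by (intro exI[of _ "\<lambda>t. fst (G t (sol t))"] conjI ballI hvd_fst d0 continuous_intros Gsc)
    show "C1_on {0..<T} (\<lambda>t. snd (sol t))" unfolding C1_on_def
      by (intro exI[of _ "\<lambda>t. snd (G t (sol t))"] conjI ballI hvd_snd d0 continuous_intros Gsc)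
    show "fst (sol 0) = X0" using sol0 by (auto simp: y0_def)
    show "snd (sol 0) = 0" using sol0 by (auto simp: y0_def)
    fix t assume t: "t \<in> {0<..<T}"
    show "((\<lambda>t. fst (sol t)) has_vector_derivative - snd (sol t) - A (fst (sol t))) (at t)"
      using hvd_fst[OF d1[OF t]] by (simp add: G_def)
    show "((\<lambda>t. snd (sol t)) has_vector_derivative - (1 / (T - t)) *\<^sub>R snd (sol t) - (1 / (T - t)) *\<^sub>R A (fst (sol t))) (at t)"
      using hvd_snd[OF d1[OF t]] by (simp add: G_def)
  qed (use uniq in blast)+
qed

end
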